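(* The principal branch $W$ of Lambert's W function, restricted to $(0,\infty)$, is a complete Bernstein function.
   Context: $W$ is the principal branch of Lambert's W function: the holomorphic function on $\mathbb{C}\setminus(-\infty,-1/e]$ satisfying $W(z)e^{W(z)}=z$ with $W(z)=\sum_{n\ge1}(-n)^{n-1}z^n/n!$ near $0$. A $C^\infty$ function $g:(0,\infty)\to\mathbb{R}$ is completely monotonic if $(-1)^ng^{(n)}(z)\ge0$ for all $z>0$, $n\ge0$; $f$ is a Bernstein function if $f$ is $C^\infty$, $f(z)>0$ for $z>0$, and $f'$ is completely monotonic. A Bernstein function $f$ is complete if it has an analytic continuation to the upper half-plane $\mathbb{H}^+=\{z\in\mathbb{C}:\Im z>0\}$ with $f(\mathbb{H}^+)\subset\mathbb{H}^+$. *)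

theory Defs
  imports "HOL-Complex_Analysis.Complex_Analysis"
begin

definition lambert_slit_plane :: "complex set" where
  "lambert_slit_plane = - {z. Im z = 0 \<and> Re z \<le> - exp (-1)}"

definition principal_lambert_W :: "(complex \<Rightarrow> complex) \<Rightarrow> bool" where
  "principal_lambert_W W \<longleftrightarrow>
     W holomorphic_on lambert_slit_plane \<and>
     (\<forall>z\<in>lambert_slit_plane. W z * exp (W z) = z) \<and>
     (\<exists>r>0. \<forall>z. norm z < r \<longrightarrow>
        (\<lambda>n. if n = 0 then 0
              else (- of_nat n) ^ (n - 1) * z ^ n / fact n) sums W z)"

definition smooth_pos :: "(real \<Rightarrow> real) \<Rightarrow> bool" where
  "smooth_pos g \<longleftrightarrow> (\<forall>n. \<forall>x>0. ((deriv ^^ n) g) differentiable (at x))"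

definition completely_monotonic :: "(real \<Rightarrow> real) \<Rightarrow> bool" where
  "completely_monotonic g \<longleftrightarrow> smooth_pos g \<and>
     (\<forall>n. \<forall>x>0. (-1) ^ n * (deriv ^^ n) g x \<ge> 0)"

definition bernstein_function :: "(real \<Rightarrow> real) \<Rightarrow> bool" where
  "bernstein_function f \<longleftrightarrow> smooth_pos f \<and> (\<forall>x>0. f x > 0) \<and>
     completely_monotonic (deriv f)"

definition complete_bernstein_function :: "(real \<Rightarrow> real) \<Rightarrow> bool" where
  "complete_bernstein_function f \<longleftrightarrow> bernstein_function f \<and>
     (\<exists>F U. open U \<and> {z. Im z > 0} \<subseteq> U \<and> complex_of_real ` {0<..} \<subseteq> U \<and>
        F holomorphic_on U \<and>
        (\<forall>x>0. F (complex_of_real x) = complex_of_real (f x)) \<and>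
        (\<forall>z. Im z > 0 \<longrightarrow> Im (F z) > 0))"

end

theory Submission
  imports Defs
begin


lemma slit_open: "open lambert_slit_plane"
  unfolding lambert_slit_plane_def
  by (intro open_Compl closed_Collect_conj closed_Collect_eq closed_Collect_le continuous_intros)

lemma slit_starlike: "starlike lambert_slit_plane"
  unfolding starlike_def
proof (intro bexI ballI subsetI)
  show "0 \<in> lambert_slit_plane" unfolding lambert_slit_plane_def by simp
next
  fix z y assume z: "z \<in> lambert_slit_plane" and y: "y \<in> closed_segment 0 z"
  then obtain u where u: "0 \<le> u" "u \<le> 1" "y = u *\<^sub>R z" by (auto simp: closed_segment_def)
  show "y \<in> lambert_slit_plane"
  proof (rule ccontr)
    assume "y \<notin> lambert_slit_plane"
    hence y1: "Im y = 0" "Re y \<le> - exp (-1)" by (auto simp: lambert_slit_plane_def)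
    have "u \<noteq> 0" using y1 u by auto
    hence "u > 0" using u by auto
    hence "Im z = 0" using y1 u by simp
    have "Re y = u * Re z" using u by simp
    moreover have "Re y < 0" using y1 by (smt (verit) exp_gt_zero)
    ultimately have "Re z \<le> Re y" using u \<open>u>0\<close>
      by (smt (verit, ccfv_SIG) mult_le_cancel_right1 mult_nonneg_nonneg)
    with y1 \<open>Im z = 0\<close> z show False by (auto simp: lambert_slit_plane_def)
  qed
qed

lemma slit_connected: "connected lambert_slit_plane"
  using slit_starlike starlike_imp_connected by blast

lemma slit_pos: "x > 0 \<Longrightarrow> complex_of_real x \<in> lambert_slit_plane"
  unfolding lambert_slit_plane_def by simp (smt (verit) exp_gt_zero)

lemma slit_upper: "Im z > 0 \<Longrightarrow> z \<in> lambert_slit_plane"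
  unfolding lambert_slit_plane_def by simp

lemma slit_ball: "norm z < exp (-1) \<Longrightarrow> z \<in> lambert_slit_plane"
  unfolding lambert_slit_plane_def using abs_Re_le_cmod[of z] by auto

lemma slit_cnj: "z \<in> lambert_slit_plane \<Longrightarrow> cnj z \<in> lambert_slit_plane"
  unfolding lambert_slit_plane_def by simp



locale LW =
  fixes W :: "complex \<Rightarrow> complex"
  assumes W: "principal_lambert_W W"
begin

abbreviation "S \<equiv> lambert_slit_plane"

lemma hol: "W holomorphic_on S" using W unfolding principal_lambert_W_def by blast
lemma eqn: "z \<in> S \<Longrightarrow> W z * exp (W z) = z" using W unfolding principal_lambert_W_def by blast

lemma W0: "W 0 = 0"
  using eqn[of 0] slit_ball[of 0] by simp

lemma Wne: "z \<in> S \<Longrightarrow> W z \<noteq> -1"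
proof
  assume z: "z \<in> S" and "W z = -1"
  hence "z = - exp (-1)" using eqn[OF z] by simp
  hence "Im z = 0" "Re z = - exp (-1)" by (simp_all add: Re_exp Im_exp)
  with z show False unfolding lambert_slit_plane_def by simp
qed

lemma derivW: assumes z: "z \<in> S" shows "deriv W z * (exp (W z) * (1 + W z)) = 1"
proof -
  have d: "(W has_field_derivative deriv W z) (at z)" using holomorphic_derivI[OF hol slit_open z] .
  have "((\<lambda>z. W z * exp (W z)) has_field_derivative deriv W z * exp (W z) + W z * (exp (W z) * deriv W z)) (at z)"
    using DERIV_mult[OF d DERIV_chain2[OF DERIV_exp d]] by (simp add: algebra_simps)
  hence "((\<lambda>z. z) has_field_derivative deriv W z * exp (W z) + W z * (exp (W z) * deriv W z)) (at z)"
    by (rule has_field_derivative_transform_within_open[OF _ slit_open z]) (simp add: eqn)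
  moreover have "((\<lambda>z. z) has_field_derivative 1) (at z)" by (rule DERIV_ident)
  ultimately have "deriv W z * exp (W z) + W z * (exp (W z) * deriv W z) = 1" using DERIV_unique by blast
  thus ?thesis by (simp add: algebra_simps)
qed

lemma derivW': "z \<in> S \<Longrightarrow> deriv W z = exp (- W z) * inverse (1 + W z)"
proof -
  assume z: "z \<in> S"
  have "inverse (exp (W z) * (1 + W z)) = deriv W z"
    using derivW[OF z] by (intro inverse_unique) (simp add: mult.commute)
  thus ?thesis by (simp add: exp_minus)
qed

lemma symm: assumes z: "z \<in> S" shows "W z = cnj (W (cnj z))"
proof -
  obtain r where r: "r > 0" "\<forall>z. norm z < r \<longrightarrow>
        (\<lambda>n. if n = 0 then 0 else (- of_nat n) ^ (n - 1) * z ^ n / fact n) sums W z"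
    using W unfolding principal_lambert_W_def by blast
  define r0 where "r0 = min r (exp (-1))"
  have r0: "r0 > 0" using r by (simp add: r0_def)
  have holg: "(cnj \<circ> W \<circ> cnj) holomorphic_on S"
    unfolding holomorphic_on_open[OF slit_open]
  proof
    fix x assume "x \<in> S"
    hence "cnj x \<in> S" by (rule slit_cnj)
    hence "(W has_field_derivative deriv W (cnj x)) (at (cnj x))" using holomorphic_derivI[OF hol slit_open] by blast
    thus "\<exists>f'. ((cnj \<circ> W \<circ> cnj) has_field_derivative f') (at x)"
      using has_field_derivative_cnj_cnj[of W _ x] by auto
  qed
  have "W w = (cnj \<circ> W \<circ> cnj) w" if w: "w \<in> ball 0 r0" for w
  proof -
    have n1: "norm w < r" "norm (cnj w) < r" using w by (auto simp: r0_def)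
    have s1: "(\<lambda>n. if n = 0 then 0 else (- of_nat n) ^ (n - 1) * w ^ n / fact n) sums W w" using r n1 by blast
    have "(\<lambda>n. if n = 0 then 0 else (- of_nat n) ^ (n - 1) * cnj w ^ n / fact n) sums W (cnj w)" using r n1 by blast
    hence "(\<lambda>n. cnj (if n = 0 then 0 else (- of_nat n) ^ (n - 1) * cnj w ^ n / fact n)) sums cnj (W (cnj w))"
      by (subst sums_cnj)
    hence "(\<lambda>n. if n = 0 then 0 else (- of_nat n) ^ (n - 1) * w ^ n / fact n) sums cnj (W (cnj w))"
      by (simp add: if_distrib cong: if_cong)
    thus ?thesis using s1 sums_unique2 by fastforce
  qed
  moreover have "ball 0 r0 \<subseteq> S"
  proof
    fix w assume "w \<in> ball (0::complex) r0"
    hence "norm w < exp (-1)" by (simp add: r0_def)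
    thus "w \<in> S" by (rule slit_ball)
  qed
  moreover have "ball (0::complex) r0 \<noteq> {}" using r0 by simp
  ultimately have "W z = (cnj \<circ> W \<circ> cnj) z"
    using analytic_continuation_open[of "ball 0 r0" S W "cnj \<circ> W \<circ> cnj" z] slit_open slit_connected hol holg z
    by blast
  thus ?thesis by simp
qed

lemma Wpos: assumes x: "x > 0" shows "W (of_real x) = of_real (Re (W (of_real x)))" "Re (W (of_real x)) > 0"
proof -
  have "W (of_real x) = cnj (W (cnj (of_real x)))" using symm[OF slit_pos[OF x]] by simp
  hence "Im (W (of_real x)) = 0" by (metis Reals_cnj_iff complex_cnj_complex_of_real complex_is_Real_iff)
  thus e: "W (of_real x) = of_real (Re (W (of_real x)))" by (simp add: complex_eq_iff)
  define w where "w = Re (W (of_real x))"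
  have "of_real w * exp (of_real w) = (of_real x :: complex)" using eqn[OF slit_pos[OF x]] e by (simp add: w_def)
  hence "w * exp w = x" by (metis exp_of_real of_real_eq_iff of_real_mult)
  show "Re (W (of_real x)) > 0" unfolding w_def[symmetric]
  proof (rule ccontr)
    assume "\<not> w > 0"
    hence "w * exp w \<le> 0" using mult_nonpos_nonneg[of w "exp w"] by simp
    with \<open>w * exp w = x\<close> x show False by simp
  qed
qed

end


definition nn :: "complex \<Rightarrow> bool" where "nn z \<longleftrightarrow> Im z = 0 \<and> Re z \<ge> 0"

lemma nn_mult: "nn a \<Longrightarrow> nn b \<Longrightarrow> nn (a * b)" by (simp add: nn_def)
lemma nn_sum: "(\<And>i. i \<in> A \<Longrightarrow> nn (f i)) \<Longrightarrow> nn (sum f A)"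
  by (induction A rule: infinite_finite_induct) (auto simp: nn_def)
lemma nn_of_nat: "nn (of_nat n)" by (simp add: nn_def)
lemma nn_of_real: "r \<ge> 0 \<Longrightarrow> nn (of_real r)" by (simp add: nn_def)

definition CMu :: "nat \<Rightarrow> (complex \<Rightarrow> complex) \<Rightarrow> bool" where
  "CMu n F \<longleftrightarrow> (\<forall>k\<le>n. \<forall>x>0. nn ((-1)^k * (deriv^^k) F (of_real x)))"

lemma CMu_mono: "CMu n F \<Longrightarrow> m \<le> n \<Longrightarrow> CMu m F"
  unfolding CMu_def by auto

lemma CMu_transfer:
  assumes "F holomorphic_on U" "G holomorphic_on U" "open U" "\<And>x. x > 0 \<Longrightarrow> of_real x \<in> U"
    "\<And>z. z \<in> U \<Longrightarrow> F z = G z" "CMu n F"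
  shows "CMu n G"
  using assms(6) unfolding CMu_def
  using higher_deriv_transform_within_open[OF assms(1,2,3) assms(4) assms(5)] by metis

lemma CMu_mult:
  assumes "A holomorphic_on U" "B holomorphic_on U" "open U" "\<And>x. x > 0 \<Longrightarrow> of_real x \<in> U"
    "CMu n A" "CMu n B"
  shows "CMu n (\<lambda>z. A z * B z)"
  unfolding CMu_def
proof (intro allI impI)
  fix k x assume k: "k \<le> n" and x: "(x::real) > 0"
  let ?z = "complex_of_real x"
  have "(deriv ^^ k) (\<lambda>w. A w * B w) ?z =
           (\<Sum>i = 0..k. of_nat (k choose i) * (deriv ^^ i) A ?z * (deriv ^^ (k-i)) B ?z)"
    by (rule higher_deriv_mult[OF assms(1,2,3) assms(4)[OF x]])
  moreover have "(-1)^k * (\<Sum>i = 0..k. of_nat (k choose i) * (deriv ^^ i) A ?z * (deriv ^^ (k-i)) B ?z) =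
      (\<Sum>i = 0..k. of_nat (k choose i) * ((-1)^i * (deriv ^^ i) A ?z) * ((-1)^(k-i) * (deriv ^^ (k-i)) B ?z))"
    unfolding sum_distrib_left
  proof (intro sum.cong refl)
    fix i assume "i \<in> {0..k}"
    hence "(-1::complex)^k = (-1)^i * (-1)^(k-i)" by (simp flip: power_add)
    thus "(-1)^k * (of_nat (k choose i) * (deriv ^^ i) A ?z * (deriv ^^ (k-i)) B ?z) =
       of_nat (k choose i) * ((-1)^i * (deriv ^^ i) A ?z) * ((-1)^(k-i) * (deriv ^^ (k-i)) B ?z)"
      by (simp add: algebra_simps)
  qed
  moreover have "nn (\<Sum>i = 0..k. of_nat (k choose i) * ((-1)^i * (deriv ^^ i) A ?z) * ((-1)^(k-i) * (deriv ^^ (k-i)) B ?z))"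
  proof (rule nn_sum)
    fix i assume "i \<in> {0..k}"
    hence i: "i \<le> n" "k - i \<le> n" using k by auto
    show "nn (of_nat (k choose i) * ((-1)^i * (deriv ^^ i) A ?z) * ((-1)^(k-i) * (deriv ^^ (k-i)) B ?z))"
      using assms(5,6) i x unfolding CMu_def by (intro nn_mult[OF nn_mult[OF nn_of_nat]]) auto
  qed
  ultimately show "nn ((-1)^k * (deriv ^^ k) (\<lambda>w. A w * B w) ?z)" by metis
qed

lemma CMu_Suc:
  assumes "F holomorphic_on U" "open U" "\<And>x. x > 0 \<Longrightarrow> of_real x \<in> U"
    "CMu 0 F" "CMu n (\<lambda>z. - deriv F z)"
  shows "CMu (Suc n) F"
  unfolding CMu_def
proof (intro allI impI)
  fix k x assume k: "k \<le> Suc n" and x: "(x::real) > 0"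
  show "nn ((-1)^k * (deriv ^^ k) F (of_real x))"
  proof (cases k)
    case 0 thus ?thesis using assms(4) x unfolding CMu_def by auto
  next
    case (Suc j)
    have hd: "deriv F holomorphic_on U" using assms(1,2) by (rule holomorphic_deriv)
    have "(deriv ^^ j) (\<lambda>z. - deriv F z) (of_real x) = - (deriv ^^ j) (deriv F) (of_real x)"
      by (rule higher_deriv_uminus[OF hd assms(2) assms(3)[OF x]])
    moreover have "nn ((-1)^j * (deriv ^^ j) (\<lambda>z. - deriv F z) (of_real x))"
      using assms(5) Suc k x unfolding CMu_def by auto
    ultimately show ?thesis using Suc by (simp add: funpow_Suc_right del: funpow.simps)
  qed
qed

definition good :: "complex set \<Rightarrow> (complex \<Rightarrow> complex) \<Rightarrow> bool" where
  "good V h \<longleftrightarrow> h holomorphic_on V \<and> (\<forall>k. \<forall>y>0. nn ((-1)^k * (deriv^^k) h (of_real y)))"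

lemma good_deriv:
  assumes "good V h" "open V" "\<And>x. x > 0 \<Longrightarrow> of_real x \<in> V"
  shows "good V (\<lambda>w. - deriv h w)"
  unfolding good_def
proof (intro conjI allI impI)
  have hd: "deriv h holomorphic_on V" by (rule holomorphic_deriv) (use assms in \<open>auto simp: good_def\<close>)
  thus "(\<lambda>w. - deriv h w) holomorphic_on V" by (rule holomorphic_on_minus)
  fix k y assume y: "(y::real) > 0"
  have "(deriv ^^ k) (\<lambda>z. - deriv h z) (of_real y) = - (deriv ^^ k) (deriv h) (of_real y)"
    by (rule higher_deriv_uminus[OF hd assms(2) assms(3)[OF y]])
  moreover have "nn ((-1)^(Suc k) * (deriv ^^ (Suc k)) h (of_real y))"
    using assms(1) y unfolding good_def by blast
  ultimately show "nn ((-1)^k * (deriv ^^ k) (\<lambda>z. - deriv h z) (of_real y))"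
    by (simp add: funpow_Suc_right del: funpow.simps)
qed

lemma CMu_comp:
  assumes U: "open U" and V: "open V" and hphi: "phi holomorphic_on U" and img: "phi ` U \<subseteq> V"
    and PU: "\<And>x. x > 0 \<Longrightarrow> of_real x \<in> U"
    and PV: "\<And>x. x > 0 \<Longrightarrow> of_real x \<in> V"
    and pos: "\<And>x. x > 0 \<Longrightarrow> \<exists>y>0. phi (of_real x) = of_real y"
  shows "CMu n (deriv phi) \<Longrightarrow> good V h \<Longrightarrow> CMu (Suc n) (\<lambda>z. h (phi z))"
proof (induction n arbitrary: h)
  have comp0: "CMu 0 (\<lambda>z. g (phi z))" if g: "good V g" for g
    unfolding CMu_def
  proof (intro allI impI)
    fix k x assume "k \<le> (0::nat)" "(x::real) > 0"
    then obtain y where "y > 0" "phi (of_real x) = of_real y" "k = 0" using pos by blast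
    thus "nn ((-1)^k * (deriv ^^ k) (\<lambda>z. g (phi z)) (of_real x))"
      using g unfolding good_def by (metis funpow_0)
  qed
  have holc: "(\<lambda>z. g (phi z)) holomorphic_on U" if "g holomorphic_on V" for g
    using holomorphic_on_compose_gen[OF hphi that img] by (simp add: o_def)
  have key: "CMu (Suc m) (\<lambda>z. h (phi z))"
    if h: "good V h" and c1: "CMu m (deriv phi)" and c2: "CMu m (\<lambda>z. - deriv h (phi z))" for m h
  proof -
    have hh: "h holomorphic_on V" using h by (simp add: good_def)
    have hd: "deriv h holomorphic_on V" using hh V by (rule holomorphic_deriv)
    have hpd: "deriv phi holomorphic_on U" using hphi U by (rule holomorphic_deriv)
    have A: "(\<lambda>z. - deriv h (phi z)) holomorphic_on U"
      using holc[OF hd] by (intro holomorphic_intros)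
    have "CMu m (\<lambda>z. - deriv h (phi z) * deriv phi z)"
      by (rule CMu_mult[OF A hpd U PU c2 c1])
    moreover have "- deriv (\<lambda>z. h (phi z)) z = - deriv h (phi z) * deriv phi z" if z: "z \<in> U" for z
    proof -
      have d1: "(phi has_field_derivative deriv phi z) (at z)" using holomorphic_derivI[OF hphi U z] .
      have d2: "(h has_field_derivative deriv h (phi z)) (at (phi z))"
        using holomorphic_derivI[OF hh V] img z by blast
      have "((\<lambda>z. h (phi z)) has_field_derivative deriv h (phi z) * deriv phi z) (at z)"
        using DERIV_chain2[OF d2 d1] .
      thus ?thesis by (simp add: DERIV_imp_deriv)
    qed
    moreover have "(\<lambda>z. - deriv h (phi z) * deriv phi z) holomorphic_on U"
      using A hpd by (rule holomorphic_on_mult)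
    moreover have "(\<lambda>z. - deriv (\<lambda>z. h (phi z)) z) holomorphic_on U"
      using holomorphic_deriv[OF holc[OF hh] U] by (rule holomorphic_on_minus)
    ultimately have "CMu m (\<lambda>z. - deriv (\<lambda>z. h (phi z)) z)"
      using CMu_transfer[OF _ _ U PU, of "\<lambda>z. - deriv h (phi z) * deriv phi z" "\<lambda>z. - deriv (\<lambda>z. h (phi z)) z" m]
      by metis
    thus ?thesis by (intro CMu_Suc[OF holc[OF hh] U PU comp0[OF h]])
  qed
  {
    case 0
    show ?case
      by (rule key[OF 0(2) 0(1)]) (use comp0[OF good_deriv[OF 0(2) V PV]] in simp)
  next
    case (Suc m)
    have "CMu (Suc m) (\<lambda>z. - deriv h (phi z))"
      using Suc.IH[OF CMu_mono[OF Suc.prems(1)] good_deriv[OF Suc.prems(2) V PV]] by simp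
    thus ?case by (rule key[OF Suc.prems(2) Suc.prems(1)])
  }
qed



lemma hd_exp: "(deriv^^k) (\<lambda>w. exp (-w)) = (\<lambda>w::complex. (-1)^k * exp (-w))"
proof (induction k)
  case 0 show ?case by simp
next
  case (Suc k)
  have "deriv (\<lambda>w::complex. (-1)^k * exp (-w)) w = (-1)^(Suc k) * exp (-w)" for w
    by (rule DERIV_imp_deriv) (auto intro!: derivative_eq_intros)
  thus ?case unfolding funpow.simps o_apply Suc.IH by (simp add: fun_eq_iff)
qed

lemma good_exp: "good UNIV (\<lambda>w. exp (-w))"
  unfolding good_def hd_exp
proof (intro conjI allI impI)
  show "(\<lambda>w. exp (- w)) holomorphic_on UNIV" by (intro holomorphic_intros)
  fix k and y :: real
  have "(-1)^k * ((-1)^k * exp (- complex_of_real y)) = of_real (exp (-y))"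
    by (simp flip: power_add mult.assoc exp_of_real)
  thus "nn ((-1)^k * ((-1)^k * exp (- complex_of_real y)))" by (simp add: nn_of_real)
qed

lemma inv_pow_deriv: fixes w :: complex and k :: nat assumes ne: "1 + w \<noteq> 0"
  shows "((\<lambda>w. (-1)^k * fact k * inverse ((1 + w) ^ Suc k)) has_field_derivative
        (-1)^(Suc k) * fact (Suc k) * inverse ((1 + w) ^ Suc (Suc k))) (at w)"
proof -
  have d: "((\<lambda>w. (1 + w) ^ Suc k) has_field_derivative of_nat (Suc k) * (1 + w) ^ k) (at w)"
  proof -
    have d0: "((\<lambda>w. 1 + w) has_field_derivative 1) (at w)" by (auto intro!: derivative_eq_intros)
    show ?thesis using DERIV_power[OF d0, of "Suc k"] by simp
  qed
  have "((\<lambda>w. inverse ((1 + w) ^ Suc k)) has_field_derivative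
      - (inverse ((1 + w) ^ Suc k) * (of_nat (Suc k) * (1 + w) ^ k) * inverse ((1 + w) ^ Suc k))) (at w)"
    by (rule DERIV_inverse'[OF d]) (use ne in simp)
  hence "((\<lambda>w. (-1)^k * fact k * inverse ((1 + w) ^ Suc k)) has_field_derivative
      (-1)^k * fact k * (- (inverse ((1 + w) ^ Suc k) * (of_nat (Suc k) * (1 + w) ^ k) * inverse ((1 + w) ^ Suc k)))) (at w)"
    by (rule DERIV_cmult)
  moreover have "(-1)^k * fact k * (- (inverse ((1 + w) ^ Suc k) * (of_nat (Suc k) * (1 + w) ^ k) * inverse ((1 + w) ^ Suc k)))
      = (-1)^(Suc k) * fact (Suc k) * inverse ((1 + w) ^ Suc (Suc k))"
  proof -
    define u where "u = 1 + w"
    have u: "u \<noteq> 0" using ne by (simp add: u_def)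
    have i: "inverse (u ^ Suc k) * u ^ k = inverse u" using u by (simp add: inverse_mult_distrib)
    have "(-1)^k * fact k * (- (inverse (u ^ Suc k) * (of_nat (Suc k) * u ^ k) * inverse (u ^ Suc k)))
       = - ((-1)^k * fact k * of_nat (Suc k)) * (inverse (u ^ Suc k) * u ^ k) * inverse (u ^ Suc k)"
      by (simp add: algebra_simps)
    also have "\<dots> = (-1)^(Suc k) * fact (Suc k) * inverse (u ^ Suc (Suc k))"
      unfolding i by (simp add: inverse_mult_distrib algebra_simps)
    finally show ?thesis by (simp add: u_def)
  qed
  ultimately show ?thesis by (rule DERIV_cong)
qed

lemma hd_inv: "(w::complex) \<in> -{-1} \<Longrightarrow> (deriv^^k) (\<lambda>w. inverse (1 + w)) w = (-1)^k * fact k * inverse ((1 + w) ^ Suc k)"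
proof (induction k arbitrary: w)
  case 0 thus ?case by simp
next
  case (Suc k)
  have ne: "1 + w \<noteq> 0" using Suc.prems by (auto simp: add_eq_0_iff)
  have "((\<lambda>w. (-1)^k * fact k * inverse ((1 + w) ^ Suc k)) has_field_derivative
        (-1)^(Suc k) * fact (Suc k) * inverse ((1 + w) ^ Suc (Suc k))) (at w)"
    using ne by (rule inv_pow_deriv)
  hence "((deriv^^k) (\<lambda>w. inverse (1 + w)) has_field_derivative
        (-1)^(Suc k) * fact (Suc k) * inverse ((1 + w) ^ Suc (Suc k))) (at w)"
    by (rule has_field_derivative_transform_within_open[of _ _ _ "-{-1}"])
       (use Suc in \<open>auto\<close>)
  thus ?case by (simp add: DERIV_imp_deriv)
qed

lemma good_inv: "good (-{-1}) (\<lambda>w. inverse (1 + w))"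
  unfolding good_def
proof (intro conjI allI impI)
  show "(\<lambda>w. inverse (1 + w)) holomorphic_on (-{-1})"
    by (intro holomorphic_intros) (auto simp: add_eq_0_iff)
  fix k and y :: real assume y: "y > 0"
  have "complex_of_real y \<in> -{-1}" using y by (auto simp: complex_eq_iff)
  hence "(-1)^k * (deriv^^k) (\<lambda>w. inverse (1 + w)) (complex_of_real y) =
     (-1)^k * ((-1)^k * fact k * inverse ((1 + complex_of_real y) ^ Suc k))" by (simp add: hd_inv)
  also have "\<dots> = of_real (fact k * inverse ((1 + y) ^ Suc k))"
    by (simp flip: power_add mult.assoc)
  finally have e: "(-1)^k * (deriv^^k) (\<lambda>w. inverse (1 + w)) (complex_of_real y) = of_real (fact k * inverse ((1 + y) ^ Suc k))" .
  have "fact k * inverse ((1 + y) ^ Suc k) \<ge> 0" using y by simp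
  thus "nn ((-1)^k * (deriv^^k) (\<lambda>w. inverse (1 + w)) (complex_of_real y))"
    unfolding e by (rule nn_of_real)
qed

context LW begin

lemma CM_derivW: "CMu n (deriv W)"
proof (induction n)
  case 0
  show ?case unfolding CMu_def
  proof (intro allI impI)
    fix k x assume "k \<le> (0::nat)" "(x::real) > 0"
    hence k: "k = 0" and x: "x > 0" by auto
    define w where "w = Re (W (of_real x))"
    have w: "W (of_real x) = of_real w" "w > 0" using Wpos[OF x] by (auto simp: w_def)
    have "deriv W (of_real x) = of_real (exp (-w) * inverse (1 + w))"
      using derivW'[OF slit_pos[OF x]] w by (simp flip: exp_of_real)
    moreover have "exp (-w) * inverse (1 + w) \<ge> 0" using w by simp
    ultimately show "nn ((-1)^k * (deriv^^k) (deriv W) (of_real x))" using k by (metis nn_of_real funpow_0 mult_1 power_0)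
  qed
next
  case (Suc n)
  have pos: "\<exists>y>0. W (of_real x) = of_real y" if "x > 0" for x
    using Wpos[OF that] by blast
  have img1: "W ` S \<subseteq> UNIV" by simp
  have nz: "1 + W z \<noteq> 0" if "z \<in> S" for z
    using Wne[OF that] by (metis add.commute eq_neg_iff_add_eq_0)
  have img2: "W ` S \<subseteq> -{-1}"
  proof
    fix y assume "y \<in> W ` S"
    then obtain z where "z \<in> S" "y = W z" by blast
    thus "y \<in> -{-1}" using Wne[of z] by simp
  qed
  have c1: "CMu (Suc n) (\<lambda>z. exp (- W z))"
    using CMu_comp[OF slit_open open_UNIV hol img1 slit_pos _ pos Suc good_exp] by simp
  have c2: "CMu (Suc n) (\<lambda>z. inverse (1 + W z))"
  proof -
    have o2: "open (-{-1::complex})" by (simp add: open_Compl)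
    have p2: "\<And>x. x > 0 \<Longrightarrow> complex_of_real x \<in> -{-1}" by (auto simp: complex_eq_iff)
    show ?thesis using CMu_comp[OF slit_open o2 hol img2 slit_pos p2 pos Suc good_inv] by simp
  qed
  have h1: "(\<lambda>z. exp (- W z)) holomorphic_on S" using hol by (intro holomorphic_intros)
  have h2: "(\<lambda>z. inverse (1 + W z)) holomorphic_on S" using hol nz
    by (intro holomorphic_intros) auto
  have C: "CMu (Suc n) (\<lambda>z. exp (- W z) * inverse (1 + W z))"
    by (rule CMu_mult[OF h1 h2 slit_open slit_pos c1 c2])
  have H1: "(\<lambda>z. exp (- W z) * inverse (1 + W z)) holomorphic_on S" using h1 h2 by (rule holomorphic_on_mult)
  have H2: "deriv W holomorphic_on S" using hol slit_open by (rule holomorphic_deriv)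
  have E: "\<And>z. z \<in> S \<Longrightarrow> exp (- W z) * inverse (1 + W z) = deriv W z"
    using derivW' by (metis)
  show ?case by (rule CMu_transfer[OF H1 H2 slit_open slit_pos E C])
qed

end


lemma re_deriv:
  assumes "F holomorphic_on U" "open U" "complex_of_real x \<in> U"
  shows "((\<lambda>t. Re (F (of_real t))) has_real_derivative Re (deriv F (of_real x))) (at x)"
  using has_field_derivative_Re[OF has_vector_derivative_real_field[OF holomorphic_derivI[OF assms]]] .

lemma re_higher:
  assumes hol: "F holomorphic_on U" and U: "open U" and P: "\<And>x. x > 0 \<Longrightarrow> complex_of_real x \<in> U"
  shows "\<forall>x>0. (deriv^^n) (\<lambda>t. Re (F (of_real t))) x = Re ((deriv^^n) F (of_real x)) \<and>
      ((deriv^^n) (\<lambda>t. Re (F (of_real t))) has_real_derivative Re ((deriv^^Suc n) F (of_real x))) (at x)"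
proof (induction n)
  case 0
  show ?case using re_deriv[OF hol U P] by simp
next
  case (Suc n)
  have eq: "(deriv^^Suc n) (\<lambda>t. Re (F (of_real t))) x = Re ((deriv^^Suc n) F (of_real x))" if x: "x > 0" for x
  proof -
    have "((deriv^^n) (\<lambda>t. Re (F (of_real t))) has_real_derivative Re ((deriv^^Suc n) F (of_real x))) (at x)"
      using Suc x by blast
    hence "deriv ((deriv^^n) (\<lambda>t. Re (F (of_real t)))) x = Re ((deriv^^Suc n) F (of_real x))"
      by (rule DERIV_imp_deriv)
    thus ?thesis by (simp only: funpow.simps(2) o_apply)
  qed
  show ?case
  proof (intro allI impI conjI)
    fix x :: real assume x: "x > 0"
    show "(deriv^^Suc n) (\<lambda>t. Re (F (of_real t))) x = Re ((deriv^^Suc n) F (of_real x))" using eq[OF x] .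
    have h: "(deriv^^Suc n) F holomorphic_on U" using hol U by (rule holomorphic_higher_deriv)
    have "((\<lambda>t. Re ((deriv^^Suc n) F (of_real t))) has_real_derivative Re (deriv ((deriv^^Suc n) F) (of_real x))) (at x)"
      by (rule re_deriv[OF h U P[OF x]])
    hence "((\<lambda>t. Re ((deriv^^Suc n) F (of_real t))) has_real_derivative Re ((deriv^^Suc (Suc n)) F (of_real x))) (at x)"
      by simp
    thus "((deriv^^Suc n) (\<lambda>t. Re (F (of_real t))) has_real_derivative Re ((deriv^^Suc (Suc n)) F (of_real x))) (at x)"
      by (rule has_field_derivative_transform_within_open[of _ _ _ "{0<..}"]) (use x eq in auto)
  qed
qed

context LW begin

lemma upper: assumes z: "Im z > 0" shows "Im (W z) > 0"
proof -
  have "deriv W 0 = 1" using derivW[OF slit_ball[of 0]] W0 by simp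
  hence d1: "(W has_field_derivative 1) (at 0)"
    using holomorphic_derivI[OF hol slit_open slit_ball[of 0]] by simp
  hence "((\<lambda>y. (W y - W 0) / (y - 0)) \<longlongrightarrow> 1) (at 0)" by (simp add: has_field_derivative_iff)
  then obtain s where s: "s > 0" "\<forall>y. y \<noteq> 0 \<and> norm (y - 0) < s \<longrightarrow> norm ((W y - W 0) / (y - 0) - 1) < 1"
    unfolding LIM_eq by (meson zero_less_one)
  define t where "t = s / 2"
  have t: "t > 0" "t < s" using s by (auto simp: t_def)
  define y0 where "y0 = \<i> * complex_of_real t"
  have "y0 \<noteq> 0" "norm y0 < s" using t by (auto simp: y0_def norm_mult)
  hence "norm (W y0 / y0 - 1) < 1" using s W0 by simp
  hence "Re (W y0 / y0) > 0" using abs_Re_le_cmod[of "W y0 / y0 - 1"] by simp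
  moreover have "Re (W y0 / y0) = Im (W y0) / t" using t
    by (simp add: y0_def Re_divide power2_eq_square)
  ultimately have y0pos: "Im (W y0) > 0" using t by (simp add: zero_less_divide_iff)
  have y0H: "y0 \<in> {z. Im z > 0}" using t by (simp add: y0_def)
  show ?thesis
  proof (rule ccontr)
    assume "\<not> Im (W z) > 0"
    hence le: "inner \<i> (W z) \<le> 0" by simp
    have HS: "{z. Im z > 0} \<subseteq> S" using slit_upper by blast
    have "connected (W ` {z. Im z > 0})"
      using connected_continuous_image[OF continuous_on_subset[OF holomorphic_on_imp_continuous_on[OF hol] HS]
          convex_connected[OF convex_halfspace_Im_gt]] .
    moreover have "W z \<in> W ` {z. Im z > 0}" "W y0 \<in> W ` {z. Im z > 0}" using z y0H by auto
    ultimately obtain v where v: "v \<in> W ` {z. Im z > 0}" "inner \<i> v = 0"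
      using connected_ivt_hyperplane[of "W ` {z. Im z > 0}" "W z" "W y0" \<i> 0] le y0pos by auto
    then obtain u where u: "Im u > 0" "v = W u" by blast
    have "u = W u * exp (W u)" using eqn[OF slit_upper[OF u(1)]] by simp
    moreover have "W u = of_real (Re (W u))" using v u by (simp add: complex_eq_iff)
    ultimately have "u = of_real (Re (W u) * exp (Re (W u)))"
      by (metis exp_of_real of_real_mult)
    hence "Im u = 0" by (metis Im_complex_of_real)
    with u show False by simp
  qed
qed

end


theorem mainTheorem11:
  fixes W :: "complex \<Rightarrow> complex"
  assumes "principal_lambert_W W"
  shows "complete_bernstein_function (\<lambda>x. Re (W (complex_of_real x)))"
proof -
  interpret LW W using assms by unfold_locales
  define f where "f = (\<lambda>x. Re (W (complex_of_real x)))"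
  have R: "\<forall>x>0. (deriv^^n) f x = Re ((deriv^^n) W (of_real x)) \<and>
      ((deriv^^n) f has_real_derivative Re ((deriv^^Suc n) W (of_real x))) (at x)" for n
    unfolding f_def by (rule re_higher[OF hol slit_open slit_pos])
  have sm: "smooth_pos f" unfolding smooth_pos_def
    using R by (meson real_differentiable_def)
  have sm': "smooth_pos (deriv f)" unfolding smooth_pos_def
  proof (intro allI impI)
    fix n and x :: real assume "x > 0"
    hence "(deriv^^Suc n) f differentiable (at x)" using sm unfolding smooth_pos_def by blast
    thus "(deriv^^n) (deriv f) differentiable (at x)" by (simp only: funpow_Suc_right o_apply)
  qed
  have sign: "(-1)^n * (deriv^^n) (deriv f) x \<ge> 0" if x: "x > 0" for n x
  proof -
    have "(deriv^^n) (deriv f) x = (deriv^^Suc n) f x" by (simp only: funpow_Suc_right o_apply)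
    also have "\<dots> = Re ((deriv^^Suc n) W (of_real x))" using R x by blast
    also have "\<dots> = Re ((deriv^^n) (deriv W) (of_real x))" by (simp only: funpow_Suc_right o_apply)
    finally have e: "(deriv^^n) (deriv f) x = Re ((deriv^^n) (deriv W) (of_real x))" .
    have "nn ((-1)^n * (deriv^^n) (deriv W) (of_real x))" using CM_derivW[of n] x unfolding CMu_def by blast
    hence "Re ((-1)^n * (deriv^^n) (deriv W) (of_real x)) \<ge> 0" by (simp add: nn_def)
    moreover have "(-1::complex)^n = of_real ((-1)^n)" by simp
    moreover have "Re (of_real ((-1)^n) * z) = (-1)^n * Re z" for z by simp
    ultimately show ?thesis unfolding e by metis
  qed
  have bern: "bernstein_function f"
    unfolding bernstein_function_def completely_monotonic_def
    using sm sm' sign Wpos(2) by (auto simp: f_def)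
  have "\<exists>F U. open U \<and> {z. Im z > 0} \<subseteq> U \<and> complex_of_real ` {0<..} \<subseteq> U \<and>
        F holomorphic_on U \<and>
        (\<forall>x>0. F (complex_of_real x) = complex_of_real (f x)) \<and>
        (\<forall>z. Im z > 0 \<longrightarrow> Im (F z) > 0)"
    by (rule exI[of _ W], rule exI[of _ S])
       (use slit_open slit_upper slit_pos hol Wpos(1) upper in \<open>auto simp: f_def\<close>)
  with bern show ?thesis unfolding complete_bernstein_function_def f_def by blast
qed


end
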